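(* Let $I\subset\mathbb R$ be a bounded closed non-degenerate interval and $f\in\bigcap_{r\ge1}L^r(I)$. If $f^-\in L^\infty(I)$ or $f^+\in L^\infty(I)$, then $\lim_{r\to+\infty}\tau_r^f=\frac12\big({\rm essinf}_If+{\rm esssup}_If\big)$ (in $\overline{\mathbb R}$).
   Context: For $f\in L^r(I)$ with $r>1$, $\tau_r^f$ denotes the unique real number minimizing $t\mapsto\|f-t\|_{L^r(I)}$. $f^+=\max\{f,0\}$, $f^-=\max\{-f,0\}$. *)

theory Defs
  imports "HOL-Analysis.Analysis" "HOL-Probability.Essential_Supremum"
begin

definition essinf :: "'a measure \<Rightarrow> ('a \<Rightarrow> ereal) \<Rightarrow> ereal" where
  "essinf M f = Sup {z. AE x in M. z \<le> f x}"

definition Lr_norm :: "'a measure \<Rightarrow> real \<Rightarrow> ('a \<Rightarrow> real) \<Rightarrow> real" where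
  "Lr_norm M r g = (\<integral>x. \<bar>g x\<bar> powr r \<partial>M) powr (1 / r)"

definition tau :: "'a measure \<Rightarrow> real \<Rightarrow> ('a \<Rightarrow> real) \<Rightarrow> real" where
  "tau M r f = (THE t. \<forall>s. Lr_norm M r (\<lambda>x. f x - t) \<le> Lr_norm M r (\<lambda>x. f x - s))"

end

theory Submission
  imports Defs
begin
lemma powr_conv:
  fixes x y u s :: real
  assumes "s \<ge> 1" "x \<ge> 0" "y \<ge> 0" "0 \<le> u" "u \<le> 1"
  shows "(u*x + (1-u)*y) powr s \<le> u * x powr s + (1-u) * y powr s"
proof -
  have aux: "c powr s \<le> c" if "0 \<le> c" "c \<le> 1" for c :: real
  proof (cases "c = 0")
    case False
    then have "c powr s \<le> c powr 1" using that assms(1) by (intro powr_mono') auto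
    then show ?thesis using False that by simp
  qed (use assms in simp)
  show ?thesis
  proof (cases "x = 0 \<or> y = 0")
    case True
    then show ?thesis
    proof
      assume x: "x = 0"
      have "((1-u)*y) powr s = (1-u) powr s * y powr s" using assms by (simp add: powr_mult)
      also have "\<dots> \<le> (1-u) * y powr s" using aux[of "1-u"] assms by (intro mult_right_mono) auto
      finally show ?thesis using x assms by simp
    next
      assume y: "y = 0"
      have "(u*x) powr s = u powr s * x powr s" using assms by (simp add: powr_mult)
      also have "\<dots> \<le> u * x powr s" using aux[of "u"] assms by (intro mult_right_mono) auto
      finally show ?thesis using y assms by simp
    qed
  next
    case False
    then have "x > 0" "y > 0" using assms by auto
    have "((1 - (1-u)) *\<^sub>R x + (1-u) *\<^sub>R y) powr s \<le> (1-(1-u)) * x powr s + (1-u) * y powr s"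
      by (rule convex_onD[OF powr_convex[OF assms(1)]]) (use \<open>x > 0\<close> \<open>y > 0\<close> assms(4,5) in auto)
    moreover have "(1 - (1-u)) *\<^sub>R x + (1-u) *\<^sub>R y = u*x + (1-u)*y" "1-(1-u) = u" by auto
    ultimately show ?thesis by metis
  qed
qed

lemma strict_mid:
  fixes p q r :: real
  assumes "r \<ge> 2" "p \<noteq> q"
  shows "\<bar>(p+q)/2\<bar> powr r < (\<bar>p\<bar> powr r + \<bar>q\<bar> powr r) / 2"
proof -
  have e: "\<bar>z\<bar> powr r = (z^2) powr (r/2)" for z :: real
  proof (cases "z = 0")
    case False
    have h: "\<bar>z\<bar> powr 2 = z^2" using False by (simp add: powr_realpow)
    have "(\<bar>z\<bar> powr 2) powr (r/2) = \<bar>z\<bar> powr r" by (simp only: powr_powr) simp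
    then have "(z^2) powr (r/2) = \<bar>z\<bar> powr r" unfolding h .
    then show ?thesis by (rule sym)
  qed (use assms in simp)
  have "((p+q)/2)^2 < (p^2+q^2)/2"
  proof -
    have "0 < (p-q)^2" using assms by simp
    then show ?thesis by (simp add: power2_eq_square field_simps)
  qed
  then have "(((p+q)/2)^2) powr (r/2) < ((p^2+q^2)/2) powr (r/2)"
    using assms by (intro powr_less_mono2) auto
  also have "((p^2+q^2)/2) powr (r/2) = ((1/2)*p^2 + (1-1/2)*q^2) powr (r/2)" by (rule arg_cong[where f="\<lambda>x. x powr (r/2)"]) (simp add: field_simps)
  also have "\<dots> \<le> (1/2) * (p^2) powr (r/2) + (1-1/2)*(q^2) powr (r/2)"
    using assms by (intro powr_conv) auto
  finally have "(((p+q)/2)^2) powr (r/2) < (1/2) * (p^2) powr (r/2) + (1-1/2)*(q^2) powr (r/2)" .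
  then show ?thesis unfolding e by simp
qed

locale lset =
  fixes M :: "'a measure" and f :: "'a \<Rightarrow> real"
  assumes fin: "finite_measure M"
    and pos: "0 < measure M (space M)"
    and meas[measurable]: "f \<in> borel_measurable M"
    and intg: "\<forall>r\<ge>1. integrable M (\<lambda>x. \<bar>f x\<bar> powr r)"
begin

definition F :: "real \<Rightarrow> real \<Rightarrow> real" where
  "F r t = (\<integral>x. \<bar>f x - t\<bar> powr r \<partial>M)"

lemma intF: assumes "r \<ge> 1" shows "integrable M (\<lambda>x. \<bar>f x - t\<bar> powr r)"
proof (rule Bochner_Integration.integrable_bound)
  interpret finite_measure M by (rule fin)
  show "integrable M (\<lambda>x. 2 powr r * (\<bar>f x\<bar> powr r + \<bar>t\<bar> powr r))"
    using intg assms finite_measure.integrable_const[OF fin] by (intro integrable_mult_right Bochner_Integration.integrable_add) auto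
  show "(\<lambda>x. \<bar>f x - t\<bar> powr r) \<in> borel_measurable M" by measurable
  show "AE x in M. norm (\<bar>f x - t\<bar> powr r) \<le> norm (2 powr r * (\<bar>f x\<bar> powr r + \<bar>t\<bar> powr r))"
  proof (rule AE_I2)
    fix x
    have "\<bar>f x - t\<bar> \<le> 2 * max \<bar>f x\<bar> \<bar>t\<bar>" by auto
    then have "\<bar>f x - t\<bar> powr r \<le> (2 * max \<bar>f x\<bar> \<bar>t\<bar>) powr r"
      using assms by (intro powr_mono2) auto
    also have "\<dots> = 2 powr r * max \<bar>f x\<bar> \<bar>t\<bar> powr r" by (simp add: powr_mult)
    also have "max \<bar>f x\<bar> \<bar>t\<bar> powr r \<le> \<bar>f x\<bar> powr r + \<bar>t\<bar> powr r"
      proof -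
        have "max \<bar>f x\<bar> \<bar>t\<bar> powr r = \<bar>f x\<bar> powr r \<or> max \<bar>f x\<bar> \<bar>t\<bar> powr r = \<bar>t\<bar> powr r" by (simp add: max_def)
        moreover have "\<bar>f x\<bar> powr r \<ge> 0" "\<bar>t\<bar> powr r \<ge> 0" by auto
        ultimately show ?thesis by linarith
      qed
    finally show "norm (\<bar>f x - t\<bar> powr r) \<le> norm (2 powr r * (\<bar>f x\<bar> powr r + \<bar>t\<bar> powr r))"
      by (simp add: mult_left_mono)
  qed
qed

lemma F_nonneg: "F r t \<ge> 0"
  unfolding F_def by (intro integral_nonneg_AE) auto

lemma F_convex: assumes "r \<ge> 1" shows "convex_on UNIV (F r)"
proof (rule convex_onI)
  fix u x y :: real assume u: "u > 0" "u < 1"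
  have "F r ((1 - u) *\<^sub>R x + u *\<^sub>R y) \<le>
      (\<integral>z. (1-u) * \<bar>f z - x\<bar> powr r + u * \<bar>f z - y\<bar> powr r \<partial>M)"
    unfolding F_def
  proof (intro integral_mono intF assms)
    show "integrable M (\<lambda>z. (1-u) * \<bar>f z - x\<bar> powr r + u * \<bar>f z - y\<bar> powr r)"
      using intF[OF assms] by auto
    fix z
    have "\<bar>f z - ((1 - u) *\<^sub>R x + u *\<^sub>R y)\<bar> = \<bar>(1-u) * (f z - x) + u * (f z - y)\<bar>"
      by (simp add: algebra_simps)
    also have "\<dots> \<le> (1-u) * \<bar>f z - x\<bar> + u * \<bar>f z - y\<bar>"
      using u abs_triangle_ineq[of "(1-u) * (f z - x)" "u * (f z - y)"] by (simp add: abs_mult)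
    finally have "\<bar>f z - ((1 - u) *\<^sub>R x + u *\<^sub>R y)\<bar> powr r \<le> ((1-u) * \<bar>f z - x\<bar> + u * \<bar>f z - y\<bar>) powr r"
      using assms by (intro powr_mono2) auto
    also have "\<dots> \<le> (1-u) * \<bar>f z - x\<bar> powr r + (1 - (1-u)) * \<bar>f z - y\<bar> powr r"
      using powr_conv[of r "\<bar>f z - x\<bar>" "\<bar>f z - y\<bar>" "1-u"] assms u by simp
    finally show "\<bar>f z - ((1 - u) *\<^sub>R x + u *\<^sub>R y)\<bar> powr r \<le> (1-u) * \<bar>f z - x\<bar> powr r + u * \<bar>f z - y\<bar> powr r"
      by simp
  qed
  also have "\<dots> = (1-u) * F r x + u * F r y"
    unfolding F_def using intF[OF assms] by simp
  finally show "F r ((1 - u) *\<^sub>R x + u *\<^sub>R y) \<le> (1 - u) * F r x + u * F r y" .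
qed simp

lemma F_cont: assumes "r \<ge> 1" shows "continuous_on UNIV (F r)"
  by (rule convex_on_continuous) (auto intro: F_convex assms)

end

context lset begin

lemma AE_False_imp: "(AE x in M. False) \<Longrightarrow> emeasure M (space M) = 0"
  using eventually_False[of "ae_filter M"] Measure_Space.ae_filter_eq_bot_iff[of M] by simp

lemma bounded_set: "\<exists>n::nat. 0 < measure M {x\<in>space M. \<bar>f x\<bar> \<le> real n}"
proof (rule ccontr)
  interpret finite_measure M by (rule fin)
  assume H: "\<not> ?thesis"
  have z: "measure M {x\<in>space M. \<bar>f x\<bar> \<le> real n} = 0" for n
  proof -
    have "\<not> 0 < measure M {x\<in>space M. \<bar>f x\<bar> \<le> real n}" using H by blast
    moreover have "0 \<le> measure M {x\<in>space M. \<bar>f x\<bar> \<le> real n}" by (rule measure_nonneg)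
    ultimately show ?thesis by linarith
  qed
  have "AE x in M. \<not> (\<bar>f x\<bar> \<le> real n)" for n
  proof (rule AE_I')
    have "emeasure M {x\<in>space M. \<bar>f x\<bar> \<le> real n} = 0"
      using z[of n] by (simp add: emeasure_eq_measure)
    then show "{x\<in>space M. \<bar>f x\<bar> \<le> real n} \<in> null_sets M"
      by (intro null_setsI) measurable
  qed auto
  then have "AE x in M. \<forall>n. \<not> (\<bar>f x\<bar> \<le> real n)" by (simp add: AE_all_countable)
  then have "AE x in M. False"
  proof (rule eventually_mono)
    fix x assume "\<forall>n. \<not> (\<bar>f x\<bar> \<le> real n)"
    then show False using real_arch_simple[of "\<bar>f x\<bar>"] by blast
  qed
  then have "emeasure M (space M) = 0" by (rule AE_False_imp)
  then show False using pos by (simp add: emeasure_eq_measure)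
qed

lemma ind_int:
  assumes "A \<in> sets M"
  shows "integrable M (\<lambda>x. indicator A x * c)" "(\<integral>x. indicator A x * c \<partial>M) = measure M A * c"
proof -
  interpret finite_measure M by (rule fin)
  show "integrable M (\<lambda>x. indicator A x * c)" using assms
    by (intro integrable_mult_left integrable_real_indicator) (auto simp: less_top[symmetric])
  show "(\<integral>x. indicator A x * c \<partial>M) = measure M A * c" using assms by simp
qed

lemma exists_min: assumes "r \<ge> 1" shows "\<exists>t. \<forall>s. F r t \<le> F r s"
proof -
  obtain n :: nat where a: "0 < measure M {x\<in>space M. \<bar>f x\<bar> \<le> real n}"
    using bounded_set by blast
  define A where "A = {x\<in>space M. \<bar>f x\<bar> \<le> real n}"
  define \<alpha> where "\<alpha> = measure M A"
  have A[measurable]: "A \<in> sets M" unfolding A_def by measurable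
  have \<alpha>: "\<alpha> > 0" using a unfolding \<alpha>_def A_def .
  have low: "F r t \<ge> \<alpha> * (\<bar>t\<bar> - n) powr r" if "\<bar>t\<bar> \<ge> n" for t :: real
  proof -
    have "\<alpha> * (\<bar>t\<bar> - n) powr r = (\<integral>x. indicator A x * (\<bar>t\<bar> - n) powr r \<partial>M)"
      using ind_int[OF A] unfolding \<alpha>_def by simp
    also have "\<dots> \<le> F r t" unfolding F_def
    proof (intro integral_mono ind_int A intF assms)
      fix x assume "x \<in> space M"
      show "indicator A x * (\<bar>t\<bar> - n) powr r \<le> \<bar>f x - t\<bar> powr r"
      proof (cases "x \<in> A")
        case True
        then have "\<bar>f x\<bar> \<le> n" unfolding A_def by auto
        then have "\<bar>t\<bar> - n \<le> \<bar>f x - t\<bar>" by linarith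
        then have "(\<bar>t\<bar> - n) powr r \<le> \<bar>f x - t\<bar> powr r" by (intro powr_mono2) (use assms that in auto)
        then show ?thesis using True by simp
      qed simp
    qed
    finally show ?thesis .
  qed
  define R where "R = n + 1 + F r 0 / \<alpha>"
  have R0: "R \<ge> 0" unfolding R_def using F_nonneg[of r 0] \<alpha> by simp
  obtain t0 where t0: "t0 \<in> {-R..R}" "\<And>y. y \<in> {-R..R} \<Longrightarrow> F r t0 \<le> F r y"
  proof -
    have "continuous_on {-R..R} (F r)" using continuous_on_subset[OF F_cont[OF assms] subset_UNIV] .
    moreover have "{-R..R} \<noteq> {}" using R0 by simp
    ultimately have "\<exists>x\<in>{-R..R}. \<forall>y\<in>{-R..R}. F r x \<le> F r y"
      by (intro continuous_attains_inf compact_Icc)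
    then show ?thesis using that by blast
  qed
  have "F r t0 \<le> F r s" for s
  proof (cases "s \<in> {-R..R}")
    case True then show ?thesis using t0 by blast
  next
    case False
    then have s: "\<bar>s\<bar> > R" by auto
    moreover have "F r 0 / \<alpha> \<ge> 0" using F_nonneg[of r 0] \<alpha> by simp
    ultimately have s1: "\<bar>s\<bar> - n \<ge> 1" unfolding R_def by linarith
    have "F r 0 < \<alpha> * (\<bar>s\<bar> - n)"
    proof -
      have "\<bar>s\<bar> - n > 1 + F r 0 / \<alpha>" using s unfolding R_def by simp
      then have "\<alpha> * (\<bar>s\<bar> - n) > \<alpha> * (1 + F r 0 / \<alpha>)" using \<alpha> by simp
      moreover have "\<alpha> * (1 + F r 0 / \<alpha>) = \<alpha> + F r 0" using \<alpha> by (simp add: field_simps)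
      ultimately show ?thesis using \<alpha> by linarith
    qed
    also have "\<bar>s\<bar> - n \<le> (\<bar>s\<bar> - n) powr r"
      using s1 assms powr_mono[of 1 r "\<bar>s\<bar> - n"] by simp
    then have "\<alpha> * (\<bar>s\<bar> - n) \<le> \<alpha> * (\<bar>s\<bar> - n) powr r" using \<alpha> by simp
    also have "\<dots> \<le> F r s" using low s1 by simp
    finally have "F r 0 < F r s" .
    moreover have "F r t0 \<le> F r 0" using t0 R0 by simp
    ultimately show ?thesis by simp
  qed
  then show ?thesis by blast
qed

lemma unique_min:
  assumes r: "r \<ge> 2" and t1: "\<forall>s. F r t1 \<le> F r s" and t2: "\<forall>s. F r t2 \<le> F r s"
  shows "t1 = t2"
proof (rule ccontr)
  assume ne: "t1 \<noteq> t2"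
  define m where "m = (t1 + t2) / 2"
  define g where "g x = (\<bar>f x - t1\<bar> powr r + \<bar>f x - t2\<bar> powr r) / 2 - \<bar>f x - m\<bar> powr r" for x
  have r1: "r \<ge> 1" using r by simp
  have gpos: "g x > 0" for x
  proof -
    have e: "((f x - t1) + (f x - t2)) / 2 = f x - m" unfolding m_def by (simp add: field_simps)
    have "\<bar>((f x - t1) + (f x - t2)) / 2\<bar> powr r < (\<bar>f x - t1\<bar> powr r + \<bar>f x - t2\<bar> powr r) / 2"
      by (rule strict_mid[OF r]) (use ne in simp)
    then have "\<bar>f x - m\<bar> powr r < (\<bar>f x - t1\<bar> powr r + \<bar>f x - t2\<bar> powr r) / 2" unfolding e .
    then show ?thesis unfolding g_def by simp
  qed
  have gi: "integrable M g" unfolding g_def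
    by (intro Bochner_Integration.integrable_diff integrable_divide Bochner_Integration.integrable_add intF r1)
  have "integral\<^sup>L M g = (F r t1 + F r t2) / 2 - F r m"
    unfolding g_def F_def
    by (simp add: Bochner_Integration.integral_diff Bochner_Integration.integral_add intF[OF r1]
        integrable_divide Bochner_Integration.integrable_add)
  also have "\<dots> \<le> 0"
  proof -
    have "F r t1 + F r t2 \<le> 2 * F r m" using t1[rule_format, of m] t2[rule_format, of m] by linarith
    then show ?thesis by simp
  qed
  finally have "integral\<^sup>L M g \<le> 0" .
  moreover have "integral\<^sup>L M g \<ge> 0" by (intro integral_nonneg_AE) (simp add: less_imp_le gpos)
  ultimately have "integral\<^sup>L M g = 0" by simp
  moreover have "AE x in M. 0 \<le> g x" by (simp add: less_imp_le gpos)
  ultimately have "AE x in M. g x = 0" using integral_nonneg_eq_0_iff_AE[OF gi] by blast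
  then have "AE x in M. False"
  proof (rule eventually_mono)
    fix x assume "g x = 0" then show False using gpos[of x] by simp
  qed
  then have "emeasure M (space M) = 0" by (rule AE_False_imp)
  then show False using pos fin by (simp add: finite_measure.emeasure_eq_measure)
qed

lemma Lr_iff:
  assumes "r > 0"
  shows "Lr_norm M r (\<lambda>x. f x - t) \<le> Lr_norm M r (\<lambda>x. f x - s) \<longleftrightarrow> F r t \<le> F r s"
proof -
  have *: "x powr (1/r) \<le> y powr (1/r) \<longleftrightarrow> x \<le> y" if "x \<ge> 0" "y \<ge> 0" for x y :: real
  proof
    assume "x \<le> y" then show "x powr (1/r) \<le> y powr (1/r)" using that assms by (intro powr_mono2) auto
  next
    assume h: "x powr (1/r) \<le> y powr (1/r)"
    show "x \<le> y"
    proof (rule ccontr)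
      assume "\<not> x \<le> y"
      then have "y powr (1/r) < x powr (1/r)" using that assms by (intro powr_less_mono2) auto
      then show False using h by simp
    qed
  qed
  show ?thesis unfolding Lr_norm_def F_def[symmetric] using * F_nonneg by (simp add: F_def)
qed

lemma tau_min:
  assumes "r \<ge> 2"
  shows "\<forall>s. F r (tau M r f) \<le> F r s"
proof -
  have r0: "r > 0" using assms by simp
  have ex1: "\<exists>!t. \<forall>s. F r t \<le> F r s"
    using exists_min[of r] unique_min[OF assms] assms by auto
  have eq: "(\<forall>s. Lr_norm M r (\<lambda>x. f x - t) \<le> Lr_norm M r (\<lambda>x. f x - s)) \<longleftrightarrow> (\<forall>s. F r t \<le> F r s)" for t
    using Lr_iff[OF r0] by simp
  show ?thesis unfolding tau_def eq using theI'[OF ex1] .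
qed

end

lemma ptw:
  fixes r y t K L :: real
  assumes r: "r \<ge> 1" and y: "L \<le> y" and t: "t \<le> K" and KL: "L \<le> K"
  defines "s \<equiv> K + 1" and "d \<equiv> K + 1 - L"
  shows "\<bar>y - s\<bar> powr r - \<bar>y - t\<bar> powr r \<le> d powr r - (if K + 2*d + 1 < y then (2*d) powr (r-1) else 0)"
proof -
  have d1: "d \<ge> 1" unfolding d_def using KL by simp
  consider "y \<le> s" | "s < y" "y \<le> K + 2*d + 1" | "K + 2*d + 1 < y" by linarith
  then show ?thesis
  proof cases
    case 1
    then have "\<bar>y - s\<bar> \<le> d" using y unfolding s_def d_def by simp
    then have "\<bar>y - s\<bar> powr r \<le> d powr r" using r by (intro powr_mono2) auto
    moreover have "\<not> (K + 2*d + 1 < y)" using 1 d1 unfolding s_def by simp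
    moreover have "0 \<le> \<bar>y - t\<bar> powr r" by simp
    ultimately show ?thesis by (simp only: if_False)
  next
    case 2
    then have "\<bar>y - s\<bar> \<le> \<bar>y - t\<bar>" using t unfolding s_def by simp
    then have "\<bar>y - s\<bar> powr r \<le> \<bar>y - t\<bar> powr r" using r by (intro powr_mono2) auto
    moreover have "0 \<le> d powr r" by simp
    moreover have "(if K + 2*d + 1 < y then (2*d) powr (r-1) else 0) = 0" using 2 by simp
    ultimately show ?thesis by linarith
  next
    case 3
    define Y where "Y = y - t"
    define Z where "Z = y - s"
    have Z0: "Z > 0" using 3 d1 unfolding Z_def s_def by simp
    have YZ: "Y - Z \<ge> 1" unfolding Y_def Z_def s_def using t by simp
    have Y2: "Y \<ge> 2 * d" unfolding Y_def using 3 t by simp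
    have Y0: "Y > 0" using Z0 YZ by simp
    have "Z powr r = Z * Z powr (r-1)" using Z0 by (simp add: powr_mult_base)
    also have "\<dots> \<le> Z * Y powr (r-1)" using Z0 YZ r by (intro mult_left_mono powr_mono2) auto
    finally have zr: "Z powr r \<le> Z * Y powr (r-1)" .
    have yr: "Y powr r = Y * Y powr (r-1)" using Y0 by (simp add: powr_mult_base)
    have "Y powr (r-1) \<le> (Y - Z) * Y powr (r-1)" using YZ by (simp add: mult_le_cancel_right1)
    then have "Y powr (r-1) \<le> Y powr r - Z powr r" using zr yr by (simp add: algebra_simps)
    moreover have "(2*d) powr (r-1) \<le> Y powr (r-1)" using Y2 r d1 by (intro powr_mono2) auto
    moreover have "\<bar>y - s\<bar> = Z" "\<bar>y - t\<bar> = Y" using Z0 Y0 unfolding Z_def Y_def by auto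
    moreover have "0 \<le> d powr r" by simp
    moreover have "(if K + 2*d + 1 < y then (2*d) powr (r-1) else 0) = (2*d) powr (r-1)" using 3 by simp
    ultimately show ?thesis by (simp only:)
  qed
qed

context lset begin

lemma const_int: "(\<integral>x. c \<partial>M) = measure M (space M) * c"
  by simp

lemma UB:
  fixes L U \<epsilon> :: real
  assumes AL: "AE x in M. L \<le> f x" and AU: "AE x in M. f x \<le> U"
    and dens: "\<And>\<delta>. \<delta> > 0 \<Longrightarrow> 0 < measure M {x\<in>space M. f x < L + \<delta>}"
    and e: "\<epsilon> > 0"
  shows "eventually (\<lambda>r. \<forall>t. (\<forall>s. F r t \<le> F r s) \<longrightarrow> t < (L+U)/2 + \<epsilon>) at_top"
proof -
  interpret finite_measure M by (rule fin)
  define \<mu> where "\<mu> = measure M (space M)"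
  have \<mu>: "\<mu> > 0" unfolding \<mu>_def using pos .
  have LU: "L \<le> U"
  proof (rule ccontr)
    assume "\<not> L \<le> U"
    have "AE x in M. False" using AL AU by eventually_elim (use \<open>\<not> L \<le> U\<close> in linarith)
    then show False using AE_False_imp pos by (simp add: emeasure_eq_measure)
  qed
  define c where "c = (L+U)/2"
  define D where "D = (U-L)/2"
  define E where "E = D + \<epsilon>/2"
  have D0: "D \<ge> 0" unfolding D_def using LU by simp
  have E0: "E > 0" unfolding E_def using D0 e by simp
  define q where "q = D / E"
  have q0: "q \<ge> 0" "q < 1" unfolding q_def using D0 E0 e E_def by auto
  have DqE: "D = q * E" unfolding q_def using E0 by simp
  define A where "A = {x\<in>space M. f x < L + \<epsilon>/2}"
  define \<alpha> where "\<alpha> = measure M A"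
  have A[measurable]: "A \<in> sets M" unfolding A_def by measurable
  have \<alpha>: "\<alpha> > 0" unfolding \<alpha>_def A_def using dens e by simp
  have "(\<lambda>n. q ^ n) \<longlonglongrightarrow> 0" using q0 by (intro LIMSEQ_realpow_zero) auto
  then have "eventually (\<lambda>n. q ^ n < \<alpha> / \<mu>) sequentially"
    using \<alpha> \<mu> by (intro order_tendstoD(2)) auto
  then obtain N :: nat where N: "q ^ N < \<alpha> / \<mu>" using eventually_sequentially by auto
  show ?thesis unfolding eventually_at_top_linorder
  proof (intro exI[of _ "max (real N) 1"] allI impI)
    fix r t :: real
    assume rN: "r \<ge> max (real N) 1" and P: "\<forall>s. F r t \<le> F r s"
    have r1: "r \<ge> 1" using rN by simp
    show "t < (L+U)/2 + \<epsilon>"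
    proof (rule ccontr)
      assume "\<not> t < (L+U)/2 + \<epsilon>"
      then have tc: "t \<ge> c + \<epsilon>" unfolding c_def by simp
      have "F r c \<le> (\<integral>x. D powr r \<partial>M)" unfolding F_def
      proof (rule integral_mono_AE)
        show "integrable M (\<lambda>x. \<bar>f x - c\<bar> powr r)" by (rule intF[OF r1])
        show "integrable M (\<lambda>x. D powr r)" by simp
        show "AE x in M. \<bar>f x - c\<bar> powr r \<le> D powr r"
          using AL AU
        proof eventually_elim
          case (elim x)
          then have "\<bar>f x - c\<bar> \<le> D" unfolding c_def D_def by (auto simp: abs_le_iff field_simps)
          then show ?case using r1 by (intro powr_mono2) auto
        qed
      qed
      also have "\<dots> = \<mu> * D powr r" unfolding \<mu>_def by simp
      finally have Fc: "F r c \<le> \<mu> * D powr r" .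
      have "\<alpha> * E powr r = (\<integral>x. indicator A x * E powr r \<partial>M)"
        using ind_int[OF A] unfolding \<alpha>_def by simp
      also have "\<dots> \<le> F r t" unfolding F_def
      proof (intro integral_mono ind_int A intF r1)
        fix x assume "x \<in> space M"
        show "indicator A x * E powr r \<le> \<bar>f x - t\<bar> powr r"
        proof (cases "x \<in> A")
          case True
          then have "f x < L + \<epsilon>/2" unfolding A_def by auto
          then have h: "(U-L)/2 + \<epsilon>/2 \<le> t - f x" using tc unfolding c_def by (simp add: field_simps)
          have "E \<le> \<bar>f x - t\<bar>" unfolding E_def D_def using h abs_ge_self[of "t - f x"] abs_minus_commute[of "f x" t] by linarith
          then have "E powr r \<le> \<bar>f x - t\<bar> powr r" using E0 r1 by (intro powr_mono2) auto
          then show ?thesis using True by simp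
        qed simp
      qed
      finally have Ft: "\<alpha> * E powr r \<le> F r t" .
      have "D powr r = q powr r * E powr r" unfolding DqE using q0 E0 by (simp add: powr_mult)
      also have "q powr r \<le> q ^ N"
      proof (cases "q = 0")
        case True then show ?thesis by simp
      next
        case False
        then have "q powr r \<le> q powr (real N)" using q0 rN by (intro powr_mono') auto
        then show ?thesis using False q0 by (simp add: powr_realpow)
      qed
      then have "q powr r * E powr r \<le> q ^ N * E powr r" by (simp add: mult_right_mono)
      finally have "\<mu> * D powr r \<le> \<mu> * (q ^ N * E powr r)" using \<mu> by simp
      also have "\<dots> < \<alpha> * E powr r"
      proof -
        have "\<mu> * q ^ N < \<alpha>" using N \<mu> by (simp add: field_simps)
        then show ?thesis using E0 by simp
      qed
      finally have "F r c < F r t" using Fc Ft by linarith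
      then show False using P by (meson not_le)
    qed
  qed
qed

lemma Unb:
  fixes L K :: real
  assumes AL: "AE x in M. L \<le> f x"
    and dens: "\<And>z. 0 < measure M {x\<in>space M. z < f x}"
  shows "eventually (\<lambda>r. \<forall>t. (\<forall>s. F r t \<le> F r s) \<longrightarrow> K < t) at_top"
proof -
  interpret finite_measure M by (rule fin)
  define \<mu> where "\<mu> = measure M (space M)"
  have \<mu>: "\<mu> > 0" unfolding \<mu>_def using pos .
  define K' where "K' = max K L"
  define s where "s = K' + 1"
  define d where "d = K' + 1 - L"
  have d1: "d \<ge> 1" unfolding d_def K'_def by simp
  define B where "B = {x\<in>space M. K' + 2*d + 1 < f x}"
  define \<beta> where "\<beta> = measure M B"
  have B[measurable]: "B \<in> sets M" unfolding B_def by measurable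
  have \<beta>: "\<beta> > 0" unfolding \<beta>_def B_def using dens by simp
  obtain N :: nat where N: "\<mu> * d / \<beta> < 2 ^ N" using real_arch_pow[of 2 "\<mu> * d / \<beta>"] by auto
  show ?thesis unfolding eventually_at_top_linorder
  proof (intro exI[of _ "real N + 1"] allI impI)
    fix r t :: real
    assume rN: "r \<ge> real N + 1" and P: "\<forall>s. F r t \<le> F r s"
    have r1: "r \<ge> 1" using rN by simp
    show "K < t"
    proof (rule ccontr)
      assume "\<not> K < t"
      then have tK: "t \<le> K'" unfolding K'_def by simp
      have "F r s - F r t = (\<integral>x. \<bar>f x - s\<bar> powr r - \<bar>f x - t\<bar> powr r \<partial>M)"
        unfolding F_def using intF[OF r1] by (simp add: Bochner_Integration.integral_diff)
      also have "\<dots> \<le> (\<integral>x. d powr r - indicator B x * (2*d) powr (r-1) \<partial>M)"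
      proof (rule integral_mono_AE)
        show "integrable M (\<lambda>x. \<bar>f x - s\<bar> powr r - \<bar>f x - t\<bar> powr r)"
          using intF[OF r1] by (intro Bochner_Integration.integrable_diff)
        show "integrable M (\<lambda>x. d powr r - indicator B x * (2*d) powr (r-1))"
          using ind_int(1)[OF B] by (intro Bochner_Integration.integrable_diff) auto
        show "AE x in M. \<bar>f x - s\<bar> powr r - \<bar>f x - t\<bar> powr r \<le> d powr r - indicator B x * (2*d) powr (r-1)"
          using AL
        proof (rule eventually_mono)
          fix x assume x: "L \<le> f x"
          have "\<bar>f x - s\<bar> powr r - \<bar>f x - t\<bar> powr r \<le> d powr r - (if K' + 2*d + 1 < f x then (2*d) powr (r-1) else 0)"
            unfolding s_def d_def by (rule ptw[OF r1 x tK]) (simp add: K'_def)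
          moreover have "indicator B x * (2*d) powr (r-1) \<le> (if K' + 2*d + 1 < f x then (2*d) powr (r-1) else 0)"
            unfolding B_def indicator_def by auto
          ultimately show "\<bar>f x - s\<bar> powr r - \<bar>f x - t\<bar> powr r \<le> d powr r - indicator B x * (2*d) powr (r-1)"
            by linarith
        qed
      qed
      also have "\<dots> = \<mu> * d powr r - \<beta> * (2*d) powr (r-1)"
        using ind_int[OF B] unfolding \<mu>_def \<beta>_def
        by (simp add: Bochner_Integration.integral_diff)
      also have "\<dots> < 0"
      proof -
        have dp: "d powr (r-1) > 0" using d1 by simp
        have "2 ^ N \<le> (2::real) powr (r-1)"
        proof -
          have "(2::real) powr (real N) \<le> 2 powr (r-1)" using rN by (intro powr_mono) auto
          then show ?thesis by (simp add: powr_realpow)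
        qed
        with N have "\<mu> * d / \<beta> < 2 powr (r-1)" by linarith
        then have "\<mu> * d < \<beta> * 2 powr (r-1)" using \<beta> by (simp add: field_simps)
        then have "\<mu> * d * d powr (r-1) < \<beta> * 2 powr (r-1) * d powr (r-1)" using dp by simp
        moreover have "d powr r = d * d powr (r-1)" using d1 by (simp add: powr_mult_base)
        moreover have "(2*d) powr (r-1) = 2 powr (r-1) * d powr (r-1)" using d1 by (simp add: powr_mult)
        ultimately show ?thesis by (simp add: algebra_simps)
      qed
      finally have "F r s < F r t" by simp
      then show False using P by (meson not_le)
    qed
  qed
qed

end

lemma essinf_eq:
  fixes g :: "'a \<Rightarrow> ereal"
  assumes [measurable]: "g \<in> borel_measurable M"
  shows "essinf M g = - esssup M (\<lambda>x. - g x)"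
proof -
  have m: "(\<lambda>x. - g x) \<in> borel_measurable M" by measurable
  have "uminus ` {z. AE x in M. - g x \<le> z} = {z. AE x in M. z \<le> g x}"
  proof (intro equalityI subsetI)
    fix w assume "w \<in> uminus ` {z. AE x in M. - g x \<le> z}"
    then obtain z where "w = - z" "AE x in M. - g x \<le> z" by auto
    then show "w \<in> {z. AE x in M. z \<le> g x}"
      by (auto elim!: eventually_mono simp: ereal_uminus_le_reorder)
  next
    fix w assume "w \<in> {z. AE x in M. z \<le> g x}"
    then have "AE x in M. - g x \<le> - w" by (auto elim!: eventually_mono)
    then have "- w \<in> {z. AE x in M. - g x \<le> z}" by simp
    then show "w \<in> uminus ` {z. AE x in M. - g x \<le> z}" by (rule rev_image_eqI) simp
  qed
  then show ?thesis
    unfolding essinf_def esssup_eq_AE[OF m] ereal_Sup_uminus_image_eq[symmetric] by simp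
qed

lemma essinf_AE:
  fixes g :: "'a \<Rightarrow> ereal"
  assumes [measurable]: "g \<in> borel_measurable M"
  shows "AE x in M. essinf M g \<le> g x"
  using esssup_AE[where M=M and f="\<lambda>x. - g x"] unfolding essinf_eq[OF assms]
  by (auto elim!: eventually_mono simp: ereal_uminus_le_reorder)

lemma essinf_pos:
  fixes g :: "'a \<Rightarrow> ereal"
  assumes [measurable]: "g \<in> borel_measurable M" and z: "essinf M g < z"
  shows "emeasure M {x\<in>space M. g x < z} > 0"
proof (rule ccontr)
  assume "\<not> ?thesis"
  then have "emeasure M {x\<in>space M. g x < z} = 0" by (simp add: not_gr_zero)
  then have "{x\<in>space M. g x < z} \<in> null_sets M" by (intro null_setsI) measurable
  then have "AE x in M. z \<le> g x" by (rule AE_I') (auto simp: not_le)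
  then have "z \<le> essinf M g" unfolding essinf_def by (intro Sup_upper) simp
  then show False using z by simp
qed

theorem theorem4:
  fixes a b :: real and f :: "real \<Rightarrow> real"
  assumes "a < b"
    and "f \<in> borel_measurable (lebesgue_on {a..b})"
    and "\<forall>r\<ge>1. integrable (lebesgue_on {a..b}) (\<lambda>x. \<bar>f x\<bar> powr r)"
    and "esssup (lebesgue_on {a..b}) (\<lambda>x. ereal (max (- f x) 0)) < \<infinity>
       \<or> esssup (lebesgue_on {a..b}) (\<lambda>x. ereal (max (f x) 0)) < \<infinity>"
  shows "((\<lambda>r. ereal (tau (lebesgue_on {a..b}) r f)) \<longlongrightarrow>
           (essinf (lebesgue_on {a..b}) (\<lambda>x. ereal (f x))
            + esssup (lebesgue_on {a..b}) (\<lambda>x. ereal (f x))) / 2) at_top"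
proof -
  define M where "M = lebesgue_on {a..b}"
  have fin: "finite_measure M" unfolding M_def
    by (rule finite_measure_lebesgue_on) (rule lmeasurable_interval)
  interpret finite_measure M by (rule fin)
  have fm[measurable]: "f \<in> borel_measurable M" using assms(2) unfolding M_def .
  have em: "emeasure M (space M) = ennreal (b - a)"
    unfolding M_def using assms(1) apply (subst emeasure_restrict_space) apply auto done
  have pos: "0 < measure M (space M)"
  proof -
    have "measure M (space M) = b - a" unfolding measure_def em using assms(1) by simp
    then show ?thesis using assms(1) by simp
  qed
  have i3: "\<forall>r\<ge>1. integrable M (\<lambda>x. \<bar>f x\<bar> powr r)" using assms(3) unfolding M_def .
  have i3n: "\<forall>r\<ge>1. integrable M (\<lambda>x. \<bar>- f x\<bar> powr r)" using i3 by simp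
  have fmn: "(\<lambda>x. - f x) \<in> borel_measurable M" by measurable
  interpret P: lset M f by (rule lset.intro[OF fin pos fm i3])
  interpret N: lset M "\<lambda>x. - f x" by (rule lset.intro[OF fin pos fmn i3n])
  have negF: "N.F r t = P.F r (- t)" for r t
    unfolding N.F_def P.F_def by (simp add: abs_minus_commute add.commute)
  define g where "g x = ereal (f x)" for x
  have gm[measurable]: "g \<in> borel_measurable M" unfolding g_def by measurable
  define Lx where "Lx = essinf M g"
  define Ux where "Ux = esssup M g"
  have AL: "AE x in M. Lx \<le> g x" unfolding Lx_def by (rule essinf_AE[OF gm])
  have AU: "AE x in M. g x \<le> Ux" unfolding Ux_def by (rule esssup_AE)
  have nF: "\<not> (AE x in M. False)"
  proof
    assume "AE x in M. False"
    then have "emeasure M (space M) = 0" by (rule P.AE_False_imp)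
    then show False using pos by (simp add: emeasure_eq_measure)
  qed
  have L1: "Lx \<noteq> \<infinity>"
  proof
    assume "Lx = \<infinity>"
    then have "AE x in M. False" using AL by (auto elim!: eventually_mono simp: g_def)
    then show False using nF by simp
  qed
  have U1: "Ux \<noteq> - \<infinity>"
  proof
    assume "Ux = - \<infinity>"
    then have "AE x in M. False" using AU by (auto elim!: eventually_mono simp: g_def)
    then show False using nF by simp
  qed
  have hyp: "Lx \<noteq> - \<infinity> \<or> Ux \<noteq> \<infinity>"
    using assms(4)
  proof
    assume h: "esssup (lebesgue_on {a..b}) (\<lambda>x. ereal (max (- f x) 0)) < \<infinity>"
    define S where "S = esssup M (\<lambda>x. ereal (max (- f x) 0))"
    have S: "S < \<infinity>" using h unfolding S_def M_def .
    obtain C :: real where C: "S \<le> ereal C"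
      using S by (cases S) auto
    have "AE x in M. ereal (max (- f x) 0) \<le> S" unfolding S_def by (rule esssup_AE)
    then have "AE x in M. ereal (- C) \<le> g x"
    proof (rule eventually_mono)
      fix x assume "ereal (max (- f x) 0) \<le> S"
      then have "ereal (max (- f x) 0) \<le> ereal C" using C by (rule order_trans)
      then have "- f x \<le> C" by simp
      then show "ereal (- C) \<le> g x" by (simp add: g_def)
    qed
    then have "ereal (- C) \<le> Lx" unfolding Lx_def essinf_def by (intro Sup_upper) simp
    then show ?thesis by auto
  next
    assume h: "esssup (lebesgue_on {a..b}) (\<lambda>x. ereal (max (f x) 0)) < \<infinity>"
    define S where "S = esssup M (\<lambda>x. ereal (max (f x) 0))"
    have S: "S < \<infinity>" using h unfolding S_def M_def .
    obtain C :: real where C: "S \<le> ereal C"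
      using S by (cases S) auto
    have "AE x in M. ereal (max (f x) 0) \<le> S" unfolding S_def by (rule esssup_AE)
    then have "AE x in M. g x \<le> ereal C"
    proof (rule eventually_mono)
      fix x assume "ereal (max (f x) 0) \<le> S"
      then have "ereal (max (f x) 0) \<le> ereal C" using C by (rule order_trans)
      then have "f x \<le> C" by simp
      then show "g x \<le> ereal C" by (simp add: g_def)
    qed
    then have "Ux \<le> ereal C" unfolding Ux_def by (intro esssup_I gm)
    then show ?thesis by auto
  qed
  define \<tau> where "\<tau> r = tau M r f" for r
  have tmin: "\<forall>s. P.F r (\<tau> r) \<le> P.F r s" if "r \<ge> 2" for r
    unfolding \<tau>_def using P.tau_min[OF that] .
  have tminN: "\<forall>s. N.F r (- \<tau> r) \<le> N.F r s" if "r \<ge> 2" for r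
    using tmin[OF that] by (simp add: negF)
  have ev2: "eventually (\<lambda>r::real. r \<ge> 2) at_top" by (rule eventually_ge_at_top)
  have denL: "0 < measure M {x\<in>space M. f x < z}" if "Lx < ereal z" for z
  proof -
    have "emeasure M {x\<in>space M. g x < ereal z} > 0"
      using essinf_pos[OF gm, of "ereal z"] that unfolding Lx_def by simp
    then show ?thesis by (simp add: g_def emeasure_eq_measure)
  qed
  have denU: "0 < measure M {x\<in>space M. z < f x}" if "ereal z < Ux" for z
  proof -
    have "emeasure M {x\<in>space M. ereal z < g x} > 0"
      using esssup_pos_measure[OF gm, of "ereal z"] that unfolding Ux_def by simp
    then show ?thesis by (simp add: g_def emeasure_eq_measure)
  qed
  have goal: "((\<lambda>r. ereal (\<tau> r)) \<longlongrightarrow> (Lx + Ux) / 2) at_top"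
  proof (cases Lx)
    case (real l)
    note Lr = real
    have ALr: "AE x in M. l \<le> f x" using AL unfolding Lr by (auto elim!: eventually_mono simp: g_def)
    show ?thesis
    proof (cases Ux)
      case (real u)
      have AUr: "AE x in M. f x \<le> u" using AU unfolding real by (auto elim!: eventually_mono simp: g_def)
      have up: "eventually (\<lambda>r. \<tau> r < (l+u)/2 + e) at_top" if e: "e > 0" for e
      proof -
        have "eventually (\<lambda>r. \<forall>t. (\<forall>s. P.F r t \<le> P.F r s) \<longrightarrow> t < (l+u)/2 + e) at_top"
          by (rule P.UB[OF ALr AUr _ e]) (rule denL, simp add: Lr)
        then show ?thesis using ev2 by eventually_elim (use tmin in blast)
      qed
      have lo: "eventually (\<lambda>r. (l+u)/2 - e < \<tau> r) at_top" if e: "e > 0" for e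
      proof -
        have ALn: "AE x in M. - u \<le> - f x" using AUr by (auto elim!: eventually_mono)
        have AUn: "AE x in M. - f x \<le> - l" using ALr by (auto elim!: eventually_mono)
        have dn: "0 < measure M {x\<in>space M. - f x < - u + \<delta>}" if "\<delta> > 0" for \<delta>
        proof -
          have "0 < measure M {x\<in>space M. u - \<delta> < f x}" using denU[of "u - \<delta>"] that real by simp
          moreover have "{x\<in>space M. - f x < - u + \<delta>} = {x\<in>space M. u - \<delta> < f x}" by auto
          ultimately show ?thesis by simp
        qed
        have "eventually (\<lambda>r. \<forall>t. (\<forall>s. N.F r t \<le> N.F r s) \<longrightarrow> t < (-u + -l)/2 + e) at_top"
          by (rule N.UB[OF ALn AUn dn e])
        then show ?thesis using ev2
        proof eventually_elim
          case (elim r)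
          then have "- \<tau> r < (-u + -l)/2 + e" using tminN by blast
          then show ?case by (simp add: field_simps)
        qed
      qed
      have "((\<lambda>r. \<tau> r) \<longlongrightarrow> (l+u)/2) at_top"
      proof (rule order_tendstoI)
        fix y assume "y < (l+u)/2"
        then show "eventually (\<lambda>r. y < \<tau> r) at_top"
          using lo[of "(l+u)/2 - y"] by simp
      next
        fix y assume "(l+u)/2 < y"
        then show "eventually (\<lambda>r. \<tau> r < y) at_top"
          using up[of "y - (l+u)/2"] by simp
      qed
      then have "((\<lambda>r. ereal (\<tau> r)) \<longlongrightarrow> ereal ((l+u)/2)) at_top" by (rule tendsto_ereal)
      moreover have "(Lx + Ux) / 2 = ereal ((l+u)/2)" using Lr real by simp
      ultimately show ?thesis by simp
    next
      case PInf
      have "(Lx + Ux) / 2 = \<infinity>" using Lr PInf by simp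
      moreover have "((\<lambda>r. ereal (\<tau> r)) \<longlongrightarrow> \<infinity>) at_top"
        unfolding tendsto_PInfty
      proof
        fix K :: real
        have "eventually (\<lambda>r. \<forall>t. (\<forall>s. P.F r t \<le> P.F r s) \<longrightarrow> K < t) at_top"
          by (rule P.Unb[OF ALr]) (rule denU, simp add: PInf)
        then show "eventually (\<lambda>r. ereal K < ereal (\<tau> r)) at_top" using ev2
          by eventually_elim (use tmin in auto)
      qed
      ultimately show ?thesis by simp
    next
      case MInf
      then show ?thesis using U1 by simp
    qed
  next
    case PInf
    then show ?thesis using L1 by simp
  next
    case MInf
    note Lm = MInf
    show ?thesis
    proof (cases Ux)
      case (real u)
      have AUr: "AE x in M. f x \<le> u" using AU unfolding real by (auto elim!: eventually_mono simp: g_def)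
      have ALn: "AE x in M. - u \<le> - f x" using AUr by (auto elim!: eventually_mono)
      have dn: "0 < measure M {x\<in>space M. z < - f x}" for z
      proof -
        have "0 < measure M {x\<in>space M. f x < - z}" using denL[of "- z"] Lm by simp
        moreover have "{x\<in>space M. z < - f x} = {x\<in>space M. f x < - z}" by auto
        ultimately show ?thesis by simp
      qed
      have "(Lx + Ux) / 2 = - \<infinity>" using Lm real by simp
      moreover have "((\<lambda>r. ereal (\<tau> r)) \<longlongrightarrow> - \<infinity>) at_top"
        unfolding tendsto_MInfty
      proof
        fix K :: real
        have "eventually (\<lambda>r. \<forall>t. (\<forall>s. N.F r t \<le> N.F r s) \<longrightarrow> - K < t) at_top"
          by (rule N.Unb[OF ALn dn])
        then show "eventually (\<lambda>r. ereal (\<tau> r) < ereal K) at_top" using ev2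
        proof eventually_elim
          case (elim r)
          then have "- K < - \<tau> r" using tminN by blast
          then show ?case by simp
        qed
      qed
      ultimately show ?thesis by simp
    next
      case PInf
      then show ?thesis using hyp Lm by simp
    next
      case MInf
      then show ?thesis using U1 by simp
    qed
  qed
  then show ?thesis unfolding \<tau>_def Lx_def Ux_def g_def M_def .
qed

end
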